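(* Let $\mathcal{A}$ be a unital algebra over a field $F$ with $\operatorname{char}(F)\neq2$ such that $\mathcal{A}$ is generated (as an algebra) by its idempotents, i.e. $\mathcal{A}=R(\mathcal{A})$. Then $\operatorname{JCent}(\mathcal{A})=\operatorname{Cent}(\mathcal{A})$.
   Context: $R(\mathcal{A})$ denotes the subalgebra of $\mathcal{A}$ generated by all idempotents of $\mathcal{A}$. $x\circ y=xy+yx$. $\operatorname{JCent}(\mathcal{A})$: linear $f:\mathcal{A}\to\mathcal{A}$ with $f(x\circ y)=f(x)\circ y$ for all $x,y$. $\operatorname{Cent}(\mathcal{A})$: linear $f$ with $f(xy)=f(x)y=xf(y)$ for all $x,y$. *)

theory Defs
  imports Complex_Main
begin

definition unital_algebra :: "('f::field \<Rightarrow> 'a::ring_1 \<Rightarrow> 'a) \<Rightarrow> bool" where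
  "unital_algebra scale \<longleftrightarrow> Vector_Spaces.vector_space scale \<and>
     (\<forall>c x y. scale c (x * y) = scale c x * y \<and> scale c (x * y) = x * scale c y)"

definition idempotents :: "'a::ring_1 set" where
  "idempotents = {e. e * e = e}"

definition is_subalgebra :: "('f::field \<Rightarrow> 'a::ring_1 \<Rightarrow> 'a) \<Rightarrow> 'a set \<Rightarrow> bool" where
  "is_subalgebra scale B \<longleftrightarrow> 0 \<in> B \<and>
     (\<forall>x\<in>B. \<forall>y\<in>B. x + y \<in> B \<and> x * y \<in> B) \<and> (\<forall>c. \<forall>x\<in>B. scale c x \<in> B)"

definition R_idem :: "('f::field \<Rightarrow> 'a::ring_1 \<Rightarrow> 'a) \<Rightarrow> 'a set" where
  "R_idem scale = \<Inter>{B. is_subalgebra scale B \<and> idempotents \<subseteq> B}"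

definition jordan_prod :: "'a::ring_1 \<Rightarrow> 'a \<Rightarrow> 'a" where
  "jordan_prod x y = x * y + y * x"

definition JCent :: "('f::field \<Rightarrow> 'a::ring_1 \<Rightarrow> 'a) \<Rightarrow> ('a \<Rightarrow> 'a) set" where
  "JCent scale = {f. Vector_Spaces.linear scale scale f \<and>
     (\<forall>x y. f (jordan_prod x y) = jordan_prod (f x) y)}"

definition Cent :: "('f::field \<Rightarrow> 'a::ring_1 \<Rightarrow> 'a) \<Rightarrow> ('a \<Rightarrow> 'a) set" where
  "Cent scale = {f. Vector_Spaces.linear scale scale f \<and>
     (\<forall>x y. f (x * y) = f x * y \<and> f (x * y) = x * f y)}"

end

theory Submission
  imports Defs
begin

lemma lin_add:
  assumes "Vector_Spaces.linear s1 s2 f"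
  shows "f (x + y) = f x + f y"
  using assms by (simp add: Vector_Spaces.linear_def module_hom_def module_hom_axioms_def)

lemma cancel2:
  fixes scale :: "'f::field \<Rightarrow> 'a::ring_1 \<Rightarrow> 'a"
  assumes "unital_algebra scale" and "(2::'f) \<noteq> 0" and "z + z = (0::'a)"
  shows "z = 0"
proof -
  have vs: "vector_space scale" using assms(1) unfolding unital_algebra_def by blast
  have "scale 2 z = z + z"
    using vector_space.vector_space_assms(2)[OF vs, of 1 1 z] vector_space.vector_space_assms(4)[OF vs]
    by (simp add: one_add_one)
  hence "scale (inverse 2) (scale 2 z) = 0" using assms(3)
    by (metis add_cancel_right_right vector_space.vector_space_assms(1)[OF vs])
  thus ?thesis using vector_space.vector_space_assms(3,4)[OF vs] assms(2) by simp
qed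

lemma commutant_all:
  fixes scale :: "'f::field \<Rightarrow> 'a::ring_1 \<Rightarrow> 'a"
  assumes "unital_algebra scale" and "R_idem scale = UNIV"
    and "\<And>e. e * e = e \<Longrightarrow> a * e = e * (a::'a)"
  shows "a * y = y * a"
proof -
  let ?B = "{x. a * x = x * a}"
  have "is_subalgebra scale ?B"
    unfolding is_subalgebra_def
  proof (intro conjI ballI allI)
    show "0 \<in> ?B" by simp
  next
    fix x y assume "x \<in> ?B" "y \<in> ?B"
    thus "x + y \<in> ?B" by (simp add: distrib_left distrib_right)
    have ax: "a * x = x * a" and ay: "a * y = y * a" using \<open>x \<in> ?B\<close> \<open>y \<in> ?B\<close> by auto
    have "a * (x * y) = (a * x) * y" by (rule mult.assoc[symmetric])
    also have "\<dots> = (x * a) * y" using ax by simp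
    also have "\<dots> = x * (a * y)" by (rule mult.assoc)
    also have "\<dots> = x * (y * a)" using ay by simp
    also have "\<dots> = (x * y) * a" by (rule mult.assoc[symmetric])
    finally show "x * y \<in> ?B" by simp
  next
    fix c x assume "x \<in> ?B"
    have ua: "\<And>c x y. scale c (x * y) = scale c x * y \<and> scale c (x * y) = x * scale c y"
      using assms(1) unfolding unital_algebra_def by blast
    have "a * scale c x = scale c (a * x)" using conjunct2[OF ua[of c a x]] by (rule sym)
    also have "\<dots> = scale c (x * a)" using \<open>x \<in> ?B\<close> by simp
    also have "\<dots> = scale c x * a" by (rule conjunct1[OF ua[of c x a]])
    finally show "scale c x \<in> ?B" by simp
  qed
  moreover have "idempotents \<subseteq> ?B" using assms(3) unfolding idempotents_def by auto
  ultimately have "R_idem scale \<subseteq> ?B" unfolding R_idem_def by blast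
  thus ?thesis using assms(2) by auto
qed

theorem proposition3p6:
  fixes scale :: "'f::field \<Rightarrow> 'a::ring_1 \<Rightarrow> 'a"
  assumes "unital_algebra scale"
    and "(2::'f) \<noteq> 0"
    and "R_idem scale = UNIV"
  shows "JCent scale = Cent scale"
proof
  show "Cent scale \<subseteq> JCent scale"
  proof
    fix f assume "f \<in> Cent scale"
    hence lin: "Vector_Spaces.linear scale scale f" and m: "\<And>x y. f (x * y) = f x * y \<and> f (x * y) = x * f y"
      unfolding Cent_def mem_Collect_eq by blast+
    have "f (jordan_prod x y) = jordan_prod (f x) y" for x y
    proof -
      have "f (x * y) = f x * y" using m by blast
      moreover have "f (y * x) = y * f x" using m by blast
      ultimately show ?thesis unfolding jordan_prod_def lin_add[OF lin] by simp
    qed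
    thus "f \<in> JCent scale" using lin unfolding JCent_def by auto
  qed
next
  show "JCent scale \<subseteq> Cent scale"
  proof
    fix f assume "f \<in> JCent scale"
    hence lin: "Vector_Spaces.linear scale scale f" and j: "\<And>x y. f (jordan_prod x y) = jordan_prod (f x) y"
      unfolding JCent_def mem_Collect_eq by blast+
    define a where "a = f 1"
    have c2: "z = 0" if "z + z = (0::'a)" for z using cancel2[OF assms(1,2) that] .
    have f2: "f y + f y = a * y + y * a" for y
      using j[of 1 y] unfolding jordan_prod_def a_def lin_add[OF lin] by simp
    have key: "(a * y - y * a) * x = x * (a * y - y * a)" for x y
    proof -
      have "f (x*y+y*x) + f (x*y+y*x) = a*(x*y+y*x) + (x*y+y*x)*a" using f2 by blast
      moreover have "f (x*y+y*x) = f x * y + y * f x" using j[of x y] unfolding jordan_prod_def .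
      ultimately have "(f x + f x) * y + y * (f x + f x) = a*(x*y+y*x) + (x*y+y*x)*a"
        by (simp add: algebra_simps)
      hence "(a * x + x * a) * y + y * (a * x + x * a) = a*(x*y+y*x) + (x*y+y*x)*a"
        using f2 by simp
      thus ?thesis by (simp add: algebra_simps)
    qed
    have ae: "a * e = e * a" if "e * e = e" for e
    proof -
      define d where "d = a * e - e * a"
      have dc: "d * x = x * d" for x using key d_def by simp
      have ee: "e * (e * x) = e * x" for x by (metis mult.assoc that)
      have "e * d * e = 0" unfolding d_def
        by (simp add: algebra_simps ee that)
      moreover have "e * d * e = d * e" using dc[of e] by (metis mult.assoc that)
      ultimately have de: "d * e = 0" by simp
      hence ed: "e * d = 0" using dc[of e] by simp
      have "a * e = e * a * e" using de unfolding d_def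
        by (simp add: algebra_simps ee that)
      moreover have "e * a = e * a * e" using ed unfolding d_def
        by (simp add: algebra_simps ee that)
      ultimately show ?thesis by simp
    qed
    have cen: "a * y = y * a" for y using commutant_all[OF assms(1,3) ae] by blast
    have fy: "f y = a * y" for y
    proof -
      have "(f y - a * y) + (f y - a * y) = 0" using f2[of y] cen[of y] by (simp add: algebra_simps)
      hence "f y - a * y = 0" by (rule c2)
      thus ?thesis by simp
    qed
    have "f (x * y) = f x * y \<and> f (x * y) = x * f y" for x y
    proof
      show "f (x * y) = f x * y" unfolding fy by (rule mult.assoc[symmetric])
      have "x * (a * y) = (x * a) * y" by (rule mult.assoc[symmetric])
      also have "\<dots> = (a * x) * y" using cen[of x] by simp
      also have "\<dots> = a * (x * y)" by (rule mult.assoc)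
      finally show "f (x * y) = x * f y" unfolding fy by simp
    qed
    thus "f \<in> Cent scale" using lin unfolding Cent_def mem_Collect_eq by blast
  qed
qed

end
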